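(* Fix a risk level $\beta>0$ and a transient MDP with a sink state as described in the context (in particular $\mu>0$ componentwise). Suppose that $\bm{w}^{\infty,\star}>-\bm{\infty}$, i.e. every component of $\bm{w}^{\infty,\star}$ is finite. Then there exists a stationary deterministic policy $\pi^\star=(\bm d^\star)_\infty\in\Pi_{\mathrm{SD}}$ such that \[ \bm{w}^{\infty,\star}=\bm{w}^{\infty}(\pi^\star)=L^{\bm d^\star}\bm{w}^{\infty,\star}, \] and $\bm{w}^{\infty,\star}$ is the unique vector satisfying this equation.
   Context: MDP: states $\bar{\mathcal S}=\{1,\dots,S,S+1\}$, with $e:=S+1$ a sink state and $\mathcal S=\{1,\dots,S\}$ the non-sink states; finite actions $\mathcal A=\{1,\dots,A\}$; transition probabilities $\bar p(s,a,s')$; real rewards $\bar r(s,a,s')$ of arbitrary sign (written $p,r$ below); $\bar p(e,a,e)=1$, $\bar r(e,a,e)=0$ for all $a$; initial distribution $\bar\mu$ with $\bar\mu_e=0$ and its restriction $\mu$ to $\mathcal S$ satisfies $\mu>0$. Policies: $\Pi_{\mathrm{HR}}$ history-dependent randomized; $\Pi_{\mathrm{MR}}$ / $\Pi_{\mathrm{MD}}$ Markov randomized / deterministic (sequences of decision rules $\bm d_k:\mathcal S\to\Delta(\mathcal A)$); $\Pi_{\mathrm{SR}}$ / $\Pi_{\mathrm{SD}}$ stationary randomized / deterministic, $\pi=(\bm d)_\infty=(\bm d,\bm d,\dots)$; $\mathcal D=(\Delta(\mathcal A))^{\mathcal S}$ the set of decision rules, $d_a(s)$ the probability of $a$ in $s$.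 Transience (standing assumption): for every $\pi\in\Pi_{\mathrm{SD}}$, $\sum_{t=0}^\infty \mathbb P^{\pi,s}[\tilde s_t=s']<\infty$ for all $s,s'\in\mathcal S$. Entropic risk measure: $\mathrm{ERM}_\beta[\tilde x]=-\beta^{-1}\log\mathbb E[e^{-\beta\tilde x}]$. For $t\in\mathbb N$, $\pi\in\Pi_{\mathrm{MD}}$, $s\in\mathcal S$: $v^t_s(\pi)=\mathrm{ERM}^{\pi,s}_\beta[\sum_{k=0}^{t-1}r(\tilde s_k,\tilde a_k,\tilde s_{k+1})]$ (process started at $s$ following $\pi$), $v^{t,\star}_s=\max_{\pi\in\Pi_{\mathrm{MD}}}v^t_s(\pi)$; exponential value functions $w^t_s(\pi)=-\exp(-\beta v^t_s(\pi))$, $w^{t,\star}_s=-\exp(-\beta v^{t,\star}_s)$; $\bm w^\infty(\pi)=\liminf_{t\to\infty}\bm w^t(\pi)$, $\bm w^{\infty,\star}=\liminf_{t\to\infty}\bm w^{t,\star}$ (componentwise). For $\bm d\in\mathcal D$ define $\bm B^{\bm d}\in\mathbb R_+^{S\times S}$, $\bm b^{\bm d}\in\mathbb R_+^S$ by $B^{\bm d}_{s,s'}=\sum_a p(s,a,s')d_a(s)e^{-\beta r(s,a,s')}$, $b^{\bm d}_s=\sum_a p(s,a,e)d_a(s)e^{-\beta r(s,a,e)}$ for $s,s'\in\mathcal S$. Exponential Bellman operators on $\mathbb R^S$: $L^{\bm d}\bm w=\bm B^{\bm d}\bm w-\bm b^{\bm d}$ and $L^\star\bm w=\max_{\bm d\in\mathcal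 D}L^{\bm d}\bm w$ (componentwise max). *)

theory Defs
  imports "HOL-Analysis.Analysis"
begin

(* Conventions: non-sink states are 1..S, the sink is e = S+1 (= Suc S),
   actions are 1..A.  p s a s' and r s a s' are transition probabilities and
   rewards.  Vectors in R^S are functions nat => real read on {1..S}. *)

definition states :: "nat \<Rightarrow> nat set" where
  "states S = {1..Suc S}"

definition paths :: "nat \<Rightarrow> nat \<Rightarrow> nat \<Rightarrow> (nat \<Rightarrow> nat) set" where
  "paths S s t = PiE {0..t} (\<lambda>k. if k = 0 then {s} else states S)"

(* Markov deterministic policies: pi k s is the action taken at time k in state s *)
definition MD_policies :: "nat \<Rightarrow> (nat \<Rightarrow> nat \<Rightarrow> nat) set" where
  "MD_policies A = {\<pi>. \<forall>k s. \<pi> k s \<in> {1..A}}"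

definition SD_rules :: "nat \<Rightarrow> (nat \<Rightarrow> nat) set" where
  "SD_rules A = {d. \<forall>s. d s \<in> {1..A}}"

definition stationary :: "(nat \<Rightarrow> nat) \<Rightarrow> (nat \<Rightarrow> nat \<Rightarrow> nat)" where
  "stationary d = (\<lambda>k. d)"

definition path_prob :: "(nat \<Rightarrow> nat \<Rightarrow> nat \<Rightarrow> real) \<Rightarrow> (nat \<Rightarrow> nat \<Rightarrow> nat) \<Rightarrow> nat \<Rightarrow> (nat \<Rightarrow> nat) \<Rightarrow> real" where
  "path_prob p \<pi> t \<omega> = (\<Prod>k<t. p (\<omega> k) (\<pi> k (\<omega> k)) (\<omega> (Suc k)))"

definition path_ret :: "(nat \<Rightarrow> nat \<Rightarrow> nat \<Rightarrow> real) \<Rightarrow> (nat \<Rightarrow> nat \<Rightarrow> nat) \<Rightarrow> nat \<Rightarrow> (nat \<Rightarrow> nat) \<Rightarrow> real" where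
  "path_ret r \<pi> t \<omega> = (\<Sum>k<t. r (\<omega> k) (\<pi> k (\<omega> k)) (\<omega> (Suc k)))"

definition state_prob :: "nat \<Rightarrow> (nat \<Rightarrow> nat \<Rightarrow> nat \<Rightarrow> real) \<Rightarrow> (nat \<Rightarrow> nat \<Rightarrow> nat) \<Rightarrow> nat \<Rightarrow> nat \<Rightarrow> nat \<Rightarrow> real" where
  "state_prob S p \<pi> s t s' = (\<Sum>\<omega>\<in>{\<omega>\<in>paths S s t. \<omega> t = s'}. path_prob p \<pi> t \<omega>)"

definition ERM :: "real \<Rightarrow> 'a set \<Rightarrow> ('a \<Rightarrow> real) \<Rightarrow> ('a \<Rightarrow> real) \<Rightarrow> real" where
  "ERM \<beta> \<Omega> P X = - (1 / \<beta>) * ln (\<Sum>\<omega>\<in>\<Omega>. P \<omega> * exp (- \<beta> * X \<omega>))"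

definition mdp :: "nat \<Rightarrow> nat \<Rightarrow> (nat \<Rightarrow> nat \<Rightarrow> nat \<Rightarrow> real) \<Rightarrow> (nat \<Rightarrow> nat \<Rightarrow> nat \<Rightarrow> real) \<Rightarrow> (nat \<Rightarrow> real) \<Rightarrow> bool" where
  "mdp S A p r \<mu> \<longleftrightarrow>
     1 \<le> A \<and>
     (\<forall>s\<in>states S. \<forall>a\<in>{1..A}. (\<forall>s'\<in>states S. 0 \<le> p s a s') \<and> (\<Sum>s'\<in>states S. p s a s') = 1) \<and>
     (\<forall>a\<in>{1..A}. p (Suc S) a (Suc S) = 1 \<and> r (Suc S) a (Suc S) = 0) \<and>
     (\<forall>s\<in>states S. 0 \<le> \<mu> s) \<and> (\<Sum>s\<in>states S. \<mu> s) = 1 \<and>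
     \<mu> (Suc S) = 0 \<and> (\<forall>s\<in>{1..S}. 0 < \<mu> s)"

definition transient :: "nat \<Rightarrow> nat \<Rightarrow> (nat \<Rightarrow> nat \<Rightarrow> nat \<Rightarrow> real) \<Rightarrow> bool" where
  "transient S A p \<longleftrightarrow>
     (\<forall>d\<in>SD_rules A. \<forall>s\<in>{1..S}. \<forall>s'\<in>{1..S}.
        summable (\<lambda>t. state_prob S p (stationary d) s t s'))"

definition v_fin :: "nat \<Rightarrow> (nat \<Rightarrow> nat \<Rightarrow> nat \<Rightarrow> real) \<Rightarrow> (nat \<Rightarrow> nat \<Rightarrow> nat \<Rightarrow> real) \<Rightarrow> real \<Rightarrow> (nat \<Rightarrow> nat \<Rightarrow> nat) \<Rightarrow> nat \<Rightarrow> nat \<Rightarrow> real" where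
  "v_fin S p r \<beta> \<pi> t s = ERM \<beta> (paths S s t) (path_prob p \<pi> t) (path_ret r \<pi> t)"

definition v_opt :: "nat \<Rightarrow> nat \<Rightarrow> (nat \<Rightarrow> nat \<Rightarrow> nat \<Rightarrow> real) \<Rightarrow> (nat \<Rightarrow> nat \<Rightarrow> nat \<Rightarrow> real) \<Rightarrow> real \<Rightarrow> nat \<Rightarrow> nat \<Rightarrow> real" where
  "v_opt S A p r \<beta> t s = (SUP \<pi>\<in>MD_policies A. v_fin S p r \<beta> \<pi> t s)"

definition w_fin :: "nat \<Rightarrow> (nat \<Rightarrow> nat \<Rightarrow> nat \<Rightarrow> real) \<Rightarrow> (nat \<Rightarrow> nat \<Rightarrow> nat \<Rightarrow> real) \<Rightarrow> real \<Rightarrow> (nat \<Rightarrow> nat \<Rightarrow> nat) \<Rightarrow> nat \<Rightarrow> nat \<Rightarrow> real" where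
  "w_fin S p r \<beta> \<pi> t s = - exp (- \<beta> * v_fin S p r \<beta> \<pi> t s)"

definition w_opt :: "nat \<Rightarrow> nat \<Rightarrow> (nat \<Rightarrow> nat \<Rightarrow> nat \<Rightarrow> real) \<Rightarrow> (nat \<Rightarrow> nat \<Rightarrow> nat \<Rightarrow> real) \<Rightarrow> real \<Rightarrow> nat \<Rightarrow> nat \<Rightarrow> real" where
  "w_opt S A p r \<beta> t s = - exp (- \<beta> * v_opt S A p r \<beta> t s)"

definition w_inf :: "nat \<Rightarrow> (nat \<Rightarrow> nat \<Rightarrow> nat \<Rightarrow> real) \<Rightarrow> (nat \<Rightarrow> nat \<Rightarrow> nat \<Rightarrow> real) \<Rightarrow> real \<Rightarrow> (nat \<Rightarrow> nat \<Rightarrow> nat) \<Rightarrow> nat \<Rightarrow> ereal" where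
  "w_inf S p r \<beta> \<pi> s = liminf (\<lambda>t. ereal (w_fin S p r \<beta> \<pi> t s))"

definition w_inf_opt :: "nat \<Rightarrow> nat \<Rightarrow> (nat \<Rightarrow> nat \<Rightarrow> nat \<Rightarrow> real) \<Rightarrow> (nat \<Rightarrow> nat \<Rightarrow> nat \<Rightarrow> real) \<Rightarrow> real \<Rightarrow> nat \<Rightarrow> ereal" where
  "w_inf_opt S A p r \<beta> s = liminf (\<lambda>t. ereal (w_opt S A p r \<beta> t s))"

(* randomized decision rule d s a = probability of action a in state s;
   the deterministic rule d corresponds to det_rule d *)
definition det_rule :: "(nat \<Rightarrow> nat) \<Rightarrow> nat \<Rightarrow> nat \<Rightarrow> real" where
  "det_rule d = (\<lambda>s a. if a = d s then 1 else 0)"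

definition Bmat :: "nat \<Rightarrow> nat \<Rightarrow> (nat \<Rightarrow> nat \<Rightarrow> nat \<Rightarrow> real) \<Rightarrow> (nat \<Rightarrow> nat \<Rightarrow> nat \<Rightarrow> real) \<Rightarrow> real \<Rightarrow> (nat \<Rightarrow> nat \<Rightarrow> real) \<Rightarrow> nat \<Rightarrow> nat \<Rightarrow> real" where
  "Bmat S A p r \<beta> dr s s' = (\<Sum>a\<in>{1..A}. p s a s' * dr s a * exp (- \<beta> * r s a s'))"

definition bvec :: "nat \<Rightarrow> nat \<Rightarrow> (nat \<Rightarrow> nat \<Rightarrow> nat \<Rightarrow> real) \<Rightarrow> (nat \<Rightarrow> nat \<Rightarrow> nat \<Rightarrow> real) \<Rightarrow> real \<Rightarrow> (nat \<Rightarrow> nat \<Rightarrow> real) \<Rightarrow> nat \<Rightarrow> real" where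
  "bvec S A p r \<beta> dr s = (\<Sum>a\<in>{1..A}. p s a (Suc S) * dr s a * exp (- \<beta> * r s a (Suc S)))"

definition L_op :: "nat \<Rightarrow> nat \<Rightarrow> (nat \<Rightarrow> nat \<Rightarrow> nat \<Rightarrow> real) \<Rightarrow> (nat \<Rightarrow> nat \<Rightarrow> nat \<Rightarrow> real) \<Rightarrow> real \<Rightarrow> (nat \<Rightarrow> nat \<Rightarrow> real) \<Rightarrow> (nat \<Rightarrow> real) \<Rightarrow> nat \<Rightarrow> real" where
  "L_op S A p r \<beta> dr w s = (\<Sum>s'\<in>{1..S}. Bmat S A p r \<beta> dr s s' * w s') - bvec S A p r \<beta> dr s"

end

theory Submission
  imports Defs
begin
definition pcons :: "nat \<Rightarrow> (nat \<Rightarrow> nat) \<Rightarrow> nat \<Rightarrow> nat" where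
  "pcons s w = (\<lambda>k. if k = 0 then s else w (k - 1))"

lemma pcons_Suc: "pcons s w (Suc k) = w k" and pcons_0: "pcons s w 0 = s"
  by (simp_all add: pcons_def)

lemma finite_paths: "finite (paths S s t)"
  unfolding paths_def states_def by (rule finite_PiE) auto

lemma paths_start: assumes "w \<in> paths S s t" shows "w 0 = s"
  using PiE_mem[OF assms[unfolded paths_def], of 0] by simp

lemma paths_mem: assumes "w \<in> paths S s t" "0 < k" "k \<le> t" shows "w k \<in> states S"
  using PiE_mem[OF assms(1)[unfolded paths_def], of k] assms(2,3) by simp

lemma paths_ext: "w \<in> paths S s t \<Longrightarrow> t < k \<Longrightarrow> w k = undefined"
  unfolding paths_def by (auto simp: PiE_iff extensional_def)

lemma paths_intro: "w 0 = s \<Longrightarrow> (\<And>k. 0 < k \<Longrightarrow> k \<le> t \<Longrightarrow> w k \<in> states S)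
   \<Longrightarrow> (\<And>k. t < k \<Longrightarrow> w k = undefined) \<Longrightarrow> w \<in> paths S s t"
  unfolding paths_def by (auto simp: PiE_iff extensional_def)

lemma paths_0: "paths S s 0 = {(\<lambda>k. if k = 0 then s else undefined)}"
proof (rule set_eqI)
  fix x
  show "x \<in> paths S s 0 \<longleftrightarrow> x \<in> {(\<lambda>k. if k = 0 then s else undefined)}"
  proof
    assume a: "x \<in> paths S s 0"
    have "x k = (if k = 0 then s else undefined)" for k
      using paths_start[OF a] paths_ext[OF a, of k] by (cases k) auto
    then show "x \<in> {(\<lambda>k. if k = 0 then s else undefined)}" by (simp add: fun_eq_iff)
  next
    assume "x \<in> {(\<lambda>k. if k = 0 then s else undefined)}"
    then have x: "x = (\<lambda>k. if k = 0 then s else undefined)" by simp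
    show "x \<in> paths S s 0" unfolding x by (rule paths_intro) auto
  qed
qed

lemma bij_pcons:
  assumes "s \<in> states S"
  shows "bij_betw (\<lambda>(s', w). pcons s w) (Sigma (states S) (\<lambda>s'. paths S s' t)) (paths S s (Suc t))"
proof (rule bij_betwI[where g = "\<lambda>w. (w 1, (\<lambda>k. w (Suc k)))"])
  show "(\<lambda>(s', w). pcons s w) \<in> Sigma (states S) (\<lambda>s'. paths S s' t) \<rightarrow> paths S s (Suc t)"
  proof (clarsimp)
    fix s' w assume a: "s' \<in> states S" "w \<in> paths S s' t"
    show "pcons s w \<in> paths S s (Suc t)"
    proof (rule paths_intro)
      show "pcons s w 0 = s" by (simp add: pcons_def)
      fix k assume "0 < k" "k \<le> Suc t"
      then show "pcons s w k \<in> states S"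
        using a paths_mem[OF a(2), of "k - 1"] paths_start[OF a(2)]
      proof (cases "k = 1")
        case True then show ?thesis using a paths_start[OF a(2)] by (simp add: pcons_def)
      next
        case False then show ?thesis using paths_mem[OF a(2), of "k - 1"] \<open>0 < k\<close> \<open>k \<le> Suc t\<close> by (simp add: pcons_def)
      qed
    next
      fix k assume "Suc t < k"
      then show "pcons s w k = undefined" using paths_ext[OF a(2), of "k - 1"] by (simp add: pcons_def)
    qed
  qed
  show "(\<lambda>w. (w 1, \<lambda>k. w (Suc k))) \<in> paths S s (Suc t) \<rightarrow> Sigma (states S) (\<lambda>s'. paths S s' t)"
  proof (rule Pi_I)
    fix w assume a: "w \<in> paths S s (Suc t)"
    have 1: "w 1 \<in> states S" using paths_mem[OF a, of 1] by simp
    have 2: "(\<lambda>k. w (Suc k)) \<in> paths S (w 1) t"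
    proof (rule paths_intro)
      fix k assume "0 < k" "k \<le> t" then show "w (Suc k) \<in> states S" using paths_mem[OF a, of "Suc k"] by simp
    next
      fix k assume "t < k" then show "w (Suc k) = undefined" using paths_ext[OF a, of "Suc k"] by simp
    qed simp
    show "(\<lambda>w. (w 1, \<lambda>k. w (Suc k))) w \<in> Sigma (states S) (\<lambda>s'. paths S s' t)"
      using 1 2 by simp
  qed
  show "(\<lambda>w. (w 1, \<lambda>k. w (Suc k))) ((\<lambda>(s', w). pcons s w) x) = x"
    if hx: "x \<in> Sigma (states S) (\<lambda>s'. paths S s' t)" for x
  proof -
    obtain s' w where x: "x = (s', w)" "s' \<in> states S" "w \<in> paths S s' t" using hx by blast
    have "(\<lambda>k. pcons s w (Suc k)) = w" by (rule ext) (simp add: pcons_def)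
    then show ?thesis using x paths_start[OF x(3)] by (simp add: pcons_def)
  qed
  show "(\<lambda>(s', w). pcons s w) (y 1, \<lambda>k. y (Suc k)) = y" if "y \<in> paths S s (Suc t)" for y
  proof -
    have y0: "y 0 = s" using paths_start[OF that] .
    have "pcons s (\<lambda>k. y (Suc k)) k = y k" for k
      using y0 unfolding pcons_def by (cases k) simp_all
    then have "pcons s (\<lambda>k. y (Suc k)) = y" by (rule ext)
    then show ?thesis by (simp only: case_prod_conv)
  qed
qed

lemma paths_Suc_sum:
  assumes "s \<in> states S"
  shows "(\<Sum>w\<in>paths S s (Suc t). g w) = (\<Sum>s'\<in>states S. \<Sum>w\<in>paths S s' t. g (pcons s w))"
proof -
  have "(\<Sum>s'\<in>states S. \<Sum>w\<in>paths S s' t. g (pcons s w))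
      = (\<Sum>(s', w)\<in>Sigma (states S) (\<lambda>s'. paths S s' t). g (pcons s w))"
    by (rule sum.Sigma) (auto simp: states_def finite_paths)
  also have "\<dots> = (\<Sum>x\<in>Sigma (states S) (\<lambda>s'. paths S s' t). g ((\<lambda>(s', w). pcons s w) x))"
    by (rule sum.cong) auto
  also have "\<dots> = (\<Sum>w\<in>paths S s (Suc t). g w)"
    by (rule sum.reindex_bij_betw[OF bij_pcons[OF assms, of t]])
  finally show ?thesis by (rule sym)
qed

lemma path_prob_pcons:
  "w \<in> paths S s' t \<Longrightarrow> path_prob p \<pi> (Suc t) (pcons s w) = p s (\<pi> 0 s) s' * path_prob p (\<lambda>k. \<pi> (Suc k)) t w"
  unfolding path_prob_def prod.lessThan_Suc_shift pcons_Suc pcons_0 using paths_start[of w S s' t] by simp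

lemma path_ret_pcons:
  "w \<in> paths S s' t \<Longrightarrow> path_ret r \<pi> (Suc t) (pcons s w) = r s (\<pi> 0 s) s' + path_ret r (\<lambda>k. \<pi> (Suc k)) t w"
  unfolding path_ret_def sum.lessThan_Suc_shift pcons_Suc pcons_0 using paths_start[of w S s' t] by simp

definition EU :: "nat \<Rightarrow> (nat \<Rightarrow> nat \<Rightarrow> nat \<Rightarrow> real) \<Rightarrow> (nat \<Rightarrow> nat \<Rightarrow> nat \<Rightarrow> real) \<Rightarrow> real \<Rightarrow> (nat \<Rightarrow> nat \<Rightarrow> nat) \<Rightarrow> nat \<Rightarrow> nat \<Rightarrow> real" where
  "EU S p r \<beta> \<pi> t s = (\<Sum>w\<in>paths S s t. path_prob p \<pi> t w * exp (- \<beta> * path_ret r \<pi> t w))"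

definition Qa :: "nat \<Rightarrow> (nat \<Rightarrow> nat \<Rightarrow> nat \<Rightarrow> real) \<Rightarrow> (nat \<Rightarrow> nat \<Rightarrow> nat \<Rightarrow> real) \<Rightarrow> real \<Rightarrow> nat \<Rightarrow> (nat \<Rightarrow> real) \<Rightarrow> nat \<Rightarrow> real" where
  "Qa S p r \<beta> a z s = (\<Sum>s'\<in>{1..S}. p s a s' * exp (- \<beta> * r s a s') * z s') + p s a (Suc S) * exp (- \<beta> * r s a (Suc S))"

lemma states_split: "states S = insert (Suc S) {1..S}" "Suc S \<notin> {1..S}"
  unfolding states_def by auto

lemma finite_states: "finite (states S)" unfolding states_def by simp

lemma MD_shift: "\<pi> \<in> MD_policies A \<Longrightarrow> (\<lambda>k. \<pi> (Suc k)) \<in> MD_policies A"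
  unfolding MD_policies_def by auto

lemma MD_in: "\<pi> \<in> MD_policies A \<Longrightarrow> \<pi> k s \<in> {1..A}"
  unfolding MD_policies_def by auto

lemma EU_0: "EU S p r \<beta> \<pi> 0 s = 1"
  unfolding EU_def paths_0 path_prob_def path_ret_def by simp

lemma exp_split: "exp (- \<beta> * (x + y)) = exp (- \<beta> * x) * exp (- \<beta> * (y::real))"
  by (subst exp_add[symmetric]) (simp add: algebra_simps)

lemma EU_Suc:
  assumes "s \<in> states S"
  shows "EU S p r \<beta> \<pi> (Suc t) s = (\<Sum>s'\<in>states S. p s (\<pi> 0 s) s' * exp (- \<beta> * r s (\<pi> 0 s) s') * EU S p r \<beta> (\<lambda>k. \<pi> (Suc k)) t s')"
proof -
  have "EU S p r \<beta> \<pi> (Suc t) s = (\<Sum>s'\<in>states S. \<Sum>w\<in>paths S s' t.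
      path_prob p \<pi> (Suc t) (pcons s w) * exp (- \<beta> * path_ret r \<pi> (Suc t) (pcons s w)))"
    unfolding EU_def by (rule paths_Suc_sum[OF assms])
  also have "\<dots> = (\<Sum>s'\<in>states S. \<Sum>w\<in>paths S s' t.
      (p s (\<pi> 0 s) s' * exp (- \<beta> * r s (\<pi> 0 s) s')) * (path_prob p (\<lambda>k. \<pi> (Suc k)) t w * exp (- \<beta> * path_ret r (\<lambda>k. \<pi> (Suc k)) t w)))"
  proof (intro sum.cong refl)
    fix s' w assume w: "w \<in> paths S s' t"
    have e: "exp (- \<beta> * (r s (\<pi> 0 s) s' + path_ret r (\<lambda>k. \<pi> (Suc k)) t w)) =
      exp (- \<beta> * r s (\<pi> 0 s) s') * exp (- \<beta> * path_ret r (\<lambda>k. \<pi> (Suc k)) t w)"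
      by (rule exp_split)
    show "path_prob p \<pi> (Suc t) (pcons s w) * exp (- \<beta> * path_ret r \<pi> (Suc t) (pcons s w)) =
      (p s (\<pi> 0 s) s' * exp (- \<beta> * r s (\<pi> 0 s) s')) * (path_prob p (\<lambda>k. \<pi> (Suc k)) t w * exp (- \<beta> * path_ret r (\<lambda>k. \<pi> (Suc k)) t w))"
      unfolding path_prob_pcons[OF w] path_ret_pcons[OF w] e by (simp only: mult_ac)
  qed
  also have "\<dots> = (\<Sum>s'\<in>states S. p s (\<pi> 0 s) s' * exp (- \<beta> * r s (\<pi> 0 s) s') * EU S p r \<beta> (\<lambda>k. \<pi> (Suc k)) t s')"
    unfolding EU_def by (simp add: sum_distrib_left)
  finally show ?thesis .
qed

lemma sp_0: "state_prob S p \<pi> s 0 s' = (if s' = s then 1 else 0)"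
proof -
  have "state_prob S p \<pi> s 0 s' = (\<Sum>w\<in>paths S s 0. if w 0 = s' then path_prob p \<pi> 0 w else 0)"
    unfolding state_prob_def by (simp add: sum.inter_filter finite_paths)
  then show ?thesis by (simp add: paths_0 path_prob_def)
qed

lemma sp_Suc:
  assumes "s \<in> states S"
  shows "state_prob S p \<pi> s (Suc t) s' = (\<Sum>s''\<in>states S. p s (\<pi> 0 s) s'' * state_prob S p (\<lambda>k. \<pi> (Suc k)) s'' t s')"
proof -
  have "state_prob S p \<pi> s (Suc t) s' = (\<Sum>w\<in>paths S s (Suc t). if w (Suc t) = s' then path_prob p \<pi> (Suc t) w else 0)"
    unfolding state_prob_def by (simp add: sum.inter_filter finite_paths)
  also have "\<dots> = (\<Sum>s''\<in>states S. \<Sum>w\<in>paths S s'' t. if pcons s w (Suc t) = s' then path_prob p \<pi> (Suc t) (pcons s w) else 0)"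
    by (rule paths_Suc_sum[OF assms])
  also have "\<dots> = (\<Sum>s''\<in>states S. \<Sum>w\<in>paths S s'' t. p s (\<pi> 0 s) s'' * (if w t = s' then path_prob p (\<lambda>k. \<pi> (Suc k)) t w else 0))"
    by (intro sum.cong refl) (auto simp: path_prob_pcons pcons_Suc)
  also have "\<dots> = (\<Sum>s''\<in>states S. p s (\<pi> 0 s) s'' * state_prob S p (\<lambda>k. \<pi> (Suc k)) s'' t s')"
    unfolding state_prob_def by (simp add: sum_distrib_left[symmetric] sum.inter_filter finite_paths)
  finally show ?thesis .
qed

locale mctx =
  fixes S A :: nat and p r :: "nat \<Rightarrow> nat \<Rightarrow> nat \<Rightarrow> real" and \<beta> :: real
  assumes beta_pos: "0 < \<beta>" and A_pos: "1 \<le> A"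
  and p_nonneg: "\<And>s a s'. s \<in> states S \<Longrightarrow> a \<in> {1..A} \<Longrightarrow> s' \<in> states S \<Longrightarrow> 0 \<le> p s a s'"
  and p_sum: "\<And>s a. s \<in> states S \<Longrightarrow> a \<in> {1..A} \<Longrightarrow> (\<Sum>s'\<in>states S. p s a s') = 1"
  and sink_p: "\<And>a. a \<in> {1..A} \<Longrightarrow> p (Suc S) a (Suc S) = 1"
  and sink_r: "\<And>a. a \<in> {1..A} \<Longrightarrow> r (Suc S) a (Suc S) = 0"
begin

lemma p_sink_zero:
  assumes "a \<in> {1..A}" "s' \<in> {1..S}"
  shows "p (Suc S) a s' = 0"
proof -
  have e: "Suc S \<in> states S" unfolding states_def by simp
  have "1 = (\<Sum>s'\<in>states S. p (Suc S) a s')" using p_sum[OF e assms(1)] by simp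
  also have "\<dots> = 1 + (\<Sum>s'\<in>{1..S}. p (Suc S) a s')"
    unfolding states_split(1) using states_split(2) sink_p[OF assms(1)] by simp
  finally have z: "(\<Sum>s'\<in>{1..S}. p (Suc S) a s') = 0" by simp
  have nn: "\<forall>x\<in>{1..S}. 0 \<le> p (Suc S) a x" using p_nonneg[OF e assms(1)] unfolding states_def by auto
  have "\<forall>x\<in>{1..S}. p (Suc S) a x = 0" using z nn sum_nonneg_eq_0_iff[of "{1..S}" "p (Suc S) a"] by simp
  then show ?thesis using assms(2) by blast
qed

lemma EU_sink: "\<pi> \<in> MD_policies A \<Longrightarrow> EU S p r \<beta> \<pi> t (Suc S) = 1"
proof (induction t arbitrary: \<pi>)
  case 0 then show ?case by (simp add: EU_0)
next
  case (Suc t)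
  have e: "Suc S \<in> states S" unfolding states_def by simp
  have a: "\<pi> 0 (Suc S) \<in> {1..A}" using MD_in[OF Suc.prems] .
  show ?case
    unfolding EU_Suc[OF e] states_split(1) using states_split(2)
    by (simp add: sink_p[OF a] sink_r[OF a] p_sink_zero[OF a] Suc.IH[OF MD_shift[OF Suc.prems]])
qed

lemma EU_pos: "\<pi> \<in> MD_policies A \<Longrightarrow> s \<in> states S \<Longrightarrow> 0 < EU S p r \<beta> \<pi> t s"
proof (induction t arbitrary: \<pi> s)
  case 0 then show ?case by (simp add: EU_0)
next
  case (Suc t)
  have a: "\<pi> 0 s \<in> {1..A}" using MD_in[OF Suc.prems(1)] .
  have "\<exists>s'\<in>states S. 0 < p s (\<pi> 0 s) s'"
  proof (rule ccontr)
    assume "\<not> ?thesis"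
    then have "\<forall>s'\<in>states S. p s (\<pi> 0 s) s' \<le> 0" by (auto simp: not_less)
    then have "(\<Sum>s'\<in>states S. p s (\<pi> 0 s) s') \<le> 0" by (simp add: sum_nonpos)
    then show False using p_sum[OF Suc.prems(2) a] by simp
  qed
  then obtain s' where s': "s' \<in> states S" "0 < p s (\<pi> 0 s) s'" by blast
  show ?case unfolding EU_Suc[OF Suc.prems(2)]
  proof (rule sum_pos2[OF finite_states s'(1)])
    show "0 < p s (\<pi> 0 s) s' * exp (- \<beta> * r s (\<pi> 0 s) s') * EU S p r \<beta> (\<lambda>k. \<pi> (Suc k)) t s'"
      using s' Suc.IH[OF MD_shift[OF Suc.prems(1)] s'(1)] by simp
    fix i assume "i \<in> states S"
    then show "0 \<le> p s (\<pi> 0 s) i * exp (- \<beta> * r s (\<pi> 0 s) i) * EU S p r \<beta> (\<lambda>k. \<pi> (Suc k)) t i"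
      using p_nonneg[OF Suc.prems(2) a] Suc.IH[OF MD_shift[OF Suc.prems(1)]]
      by (simp add: less_imp_le)
  qed
qed

lemma EU_Q:
  assumes "\<pi> \<in> MD_policies A" "s \<in> {1..S}"
  shows "EU S p r \<beta> \<pi> (Suc t) s = Qa S p r \<beta> (\<pi> 0 s) (EU S p r \<beta> (\<lambda>k. \<pi> (Suc k)) t) s"
proof -
  have s: "s \<in> states S" using assms(2) unfolding states_def by auto
  show ?thesis
    unfolding EU_Suc[OF s] Qa_def states_split(1) using states_split(2)
    by (simp add: EU_sink[OF MD_shift[OF assms(1)]] add.commute)
qed

lemma w_fin_EU:
  assumes "\<pi> \<in> MD_policies A" "s \<in> states S"
  shows "w_fin S p r \<beta> \<pi> t s = - EU S p r \<beta> \<pi> t s"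
  using EU_pos[OF assms, of t] beta_pos
  unfolding w_fin_def v_fin_def ERM_def EU_def[symmetric] by simp

end

context mctx begin

primrec Xopt :: "nat \<Rightarrow> nat \<Rightarrow> real" where
  "Xopt 0 = (\<lambda>s. 1)"
| "Xopt (Suc t) = (\<lambda>s. Min ((\<lambda>a. Qa S p r \<beta> a (Xopt t) s) ` {1..A}))"

lemma in_states: "s \<in> {1..S} \<Longrightarrow> s \<in> states S" unfolding states_def by auto

lemma Qa_mono:
  assumes "a \<in> {1..A}" "s \<in> {1..S}" "\<And>s'. s' \<in> {1..S} \<Longrightarrow> z s' \<le> z' s'"
  shows "Qa S p r \<beta> a z s \<le> Qa S p r \<beta> a z' s"
  unfolding Qa_def
proof (intro add_right_mono sum_mono)
  fix s' assume s': "s' \<in> {1..S}"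
  have "0 \<le> p s a s' * exp (- \<beta> * r s a s')"
    using p_nonneg[OF in_states[OF assms(2)] assms(1) in_states[OF s']] by simp
  then show "p s a s' * exp (- \<beta> * r s a s') * z s' \<le> p s a s' * exp (- \<beta> * r s a s') * z' s'"
    by (rule mult_left_mono[OF assms(3)[OF s']])
qed

lemma Qa_cong:
  assumes "\<And>s'. s' \<in> {1..S} \<Longrightarrow> z s' = z' s'"
  shows "Qa S p r \<beta> a z s = Qa S p r \<beta> a z' s"
  unfolding Qa_def using assms by simp

lemma Min_Q_ex: "\<exists>a\<in>{1..A}. Qa S p r \<beta> a z s = Min ((\<lambda>a. Qa S p r \<beta> a z s) ` {1..A})"
proof -
  have "Min ((\<lambda>a. Qa S p r \<beta> a z s) ` {1..A}) \<in> (\<lambda>a. Qa S p r \<beta> a z s) ` {1..A}"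
    using A_pos by (intro Min_in) auto
  then show ?thesis by force
qed

lemma Min_Q_le: "a \<in> {1..A} \<Longrightarrow> Min ((\<lambda>a. Qa S p r \<beta> a z s) ` {1..A}) \<le> Qa S p r \<beta> a z s"
  by (intro Min_le) auto

lemma Xopt_le: "\<pi> \<in> MD_policies A \<Longrightarrow> s \<in> {1..S} \<Longrightarrow> Xopt t s \<le> EU S p r \<beta> \<pi> t s"
proof (induction t arbitrary: \<pi> s)
  case 0 then show ?case by (simp add: EU_0)
next
  case (Suc t)
  have a: "\<pi> 0 s \<in> {1..A}" using MD_in[OF Suc.prems(1)] .
  have "Xopt (Suc t) s \<le> Qa S p r \<beta> (\<pi> 0 s) (Xopt t) s" using Min_Q_le[OF a] by simp
  also have "\<dots> \<le> Qa S p r \<beta> (\<pi> 0 s) (EU S p r \<beta> (\<lambda>k. \<pi> (Suc k)) t) s"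
    using Qa_mono[OF a Suc.prems(2)] Suc.IH[OF MD_shift[OF Suc.prems(1)]] by blast
  also have "\<dots> = EU S p r \<beta> \<pi> (Suc t) s" using EU_Q[OF Suc.prems] by simp
  finally show ?case .
qed

lemma Xopt_attained: "\<exists>\<pi>\<in>MD_policies A. \<forall>s\<in>{1..S}. EU S p r \<beta> \<pi> t s = Xopt t s"
proof (induction t)
  case 0
  have "(\<lambda>k s. 1) \<in> MD_policies A" using A_pos unfolding MD_policies_def by auto
  then show ?case by (auto simp: EU_0)
next
  case (Suc t)
  then obtain \<pi>' where \<pi>': "\<pi>' \<in> MD_policies A" "\<forall>s\<in>{1..S}. EU S p r \<beta> \<pi>' t s = Xopt t s" by blast
  define dm where "dm = (\<lambda>s. SOME a. a \<in> {1..A} \<and> Qa S p r \<beta> a (Xopt t) s = Min ((\<lambda>a. Qa S p r \<beta> a (Xopt t) s) ` {1..A}))"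
  have dm: "dm s \<in> {1..A} \<and> Qa S p r \<beta> (dm s) (Xopt t) s = Xopt (Suc t) s" for s
    unfolding dm_def Xopt.simps using someI_ex[OF Min_Q_ex[unfolded Bex_def, of "Xopt t" s]] by simp
  define \<pi> where "\<pi> = (\<lambda>k. if k = 0 then dm else \<pi>' (k - 1))"
  have sh: "(\<lambda>k. \<pi> (Suc k)) = \<pi>'" unfolding \<pi>_def by simp
  have mem: "\<pi> \<in> MD_policies A" using \<pi>'(1) dm unfolding MD_policies_def \<pi>_def by auto
  have "EU S p r \<beta> \<pi> (Suc t) s = Xopt (Suc t) s" if s: "s \<in> {1..S}" for s
  proof -
    have "EU S p r \<beta> \<pi> (Suc t) s = Qa S p r \<beta> (dm s) (EU S p r \<beta> \<pi>' t) s"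
      using EU_Q[OF mem s, of t] unfolding sh by (simp add: \<pi>_def)
    also have "\<dots> = Qa S p r \<beta> (dm s) (Xopt t) s" using \<pi>'(2) by (intro Qa_cong) auto
    also have "\<dots> = Xopt (Suc t) s" using dm by simp
    finally show ?thesis .
  qed
  then show ?case using mem by blast
qed

lemma Xopt_pos: "s \<in> {1..S} \<Longrightarrow> 0 < Xopt t s"
  using Xopt_attained[of t] EU_pos in_states by metis

lemma v_fin_EU: "v_fin S p r \<beta> \<pi> t s = - (1 / \<beta>) * ln (EU S p r \<beta> \<pi> t s)"
  unfolding v_fin_def ERM_def EU_def ..

lemma w_opt_eq:
  assumes s: "s \<in> {1..S}"
  shows "w_opt S A p r \<beta> t s = - Xopt t s"
proof -
  obtain \<pi>s where \<pi>s: "\<pi>s \<in> MD_policies A" "\<forall>s\<in>{1..S}. EU S p r \<beta> \<pi>s t s = Xopt t s"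
    using Xopt_attained by blast
  have "v_opt S A p r \<beta> t s = v_fin S p r \<beta> \<pi>s t s"
    unfolding v_opt_def
  proof (rule cSup_eq_maximum)
    show "v_fin S p r \<beta> \<pi>s t s \<in> (\<lambda>\<pi>. v_fin S p r \<beta> \<pi> t s) ` MD_policies A" using \<pi>s(1) by blast
    fix x assume "x \<in> (\<lambda>\<pi>. v_fin S p r \<beta> \<pi> t s) ` MD_policies A"
    then obtain \<pi> where \<pi>: "\<pi> \<in> MD_policies A" "x = v_fin S p r \<beta> \<pi> t s" by blast
    have "EU S p r \<beta> \<pi>s t s \<le> EU S p r \<beta> \<pi> t s" using Xopt_le[OF \<pi>(1) s] \<pi>s(2) s by simp
    then have "ln (EU S p r \<beta> \<pi>s t s) \<le> ln (EU S p r \<beta> \<pi> t s)"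
      using EU_pos[OF \<pi>s(1) in_states[OF s], of t] EU_pos[OF \<pi>(1) in_states[OF s], of t] by simp
    then show "x \<le> v_fin S p r \<beta> \<pi>s t s" unfolding \<pi>(2) v_fin_EU using beta_pos
      by (simp add: divide_right_mono)
  qed
  then have "w_opt S A p r \<beta> t s = w_fin S p r \<beta> \<pi>s t s" unfolding w_opt_def w_fin_def by simp
  then show ?thesis using w_fin_EU[OF \<pi>s(1) in_states[OF s]] \<pi>s(2) s by simp
qed

end

locale contr =
  fixes I :: "nat set" and Bm :: "nat \<Rightarrow> nat \<Rightarrow> real" and bv :: "nat \<Rightarrow> real"
  assumes fin: "finite I"
  and Bnn: "\<And>s s'. s \<in> I \<Longrightarrow> s' \<in> I \<Longrightarrow> 0 \<le> Bm s s'"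
  and bnn: "\<And>s. s \<in> I \<Longrightarrow> 0 \<le> bv s"
begin

definition Bl :: "(nat \<Rightarrow> real) \<Rightarrow> nat \<Rightarrow> real" where
  "Bl z = (\<lambda>s. \<Sum>s'\<in>I. Bm s s' * z s')"

primrec cc :: "nat \<Rightarrow> nat \<Rightarrow> real" where
  "cc 0 = (\<lambda>s. 0)"
| "cc (Suc n) = (\<lambda>s. bv s + Bl (cc n) s)"

lemma Bl_mono: "(\<And>s. s \<in> I \<Longrightarrow> z s \<le> z' s) \<Longrightarrow> s \<in> I \<Longrightarrow> Bl z s \<le> Bl z' s"
  unfolding Bl_def by (intro sum_mono mult_left_mono) (auto intro: Bnn)

lemma Blp_mono: "(\<And>s. s \<in> I \<Longrightarrow> z s \<le> z' s) \<Longrightarrow> s \<in> I \<Longrightarrow> (Bl ^^ n) z s \<le> (Bl ^^ n) z' s"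
proof (induction n arbitrary: s)
  case 0 then show ?case by simp
next
  case (Suc n) then show ?case by (simp add: Bl_mono)
qed

lemma Bl_scale: "Bl (\<lambda>s. c * z s) = (\<lambda>s. c * Bl z s)"
  unfolding Bl_def by (simp add: sum_distrib_left mult_ac)

lemma Blp_scale: "(Bl ^^ n) (\<lambda>s. c * z s) = (\<lambda>s. c * (Bl ^^ n) z s)"
  by (induction n) (simp_all add: Bl_scale)

lemma Bl_add: "Bl (\<lambda>s. z s + z' s) = (\<lambda>s. Bl z s + Bl z' s)"
  unfolding Bl_def by (simp add: sum.distrib distrib_left)

lemma Bl_diff: "Bl (\<lambda>s. z s - z' s) = (\<lambda>s. Bl z s - Bl z' s)"
  unfolding Bl_def by (simp add: sum_subtractf right_diff_distrib)

lemma Blp_diff: "(Bl ^^ n) (\<lambda>s. z s - z' s) = (\<lambda>s. (Bl ^^ n) z s - (Bl ^^ n) z' s)"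
  by (induction n) (simp_all add: Bl_diff)

lemma Blp_nonneg: "(\<And>s. s \<in> I \<Longrightarrow> 0 \<le> z s) \<Longrightarrow> s \<in> I \<Longrightarrow> 0 \<le> (Bl ^^ n) z s"
  using Blp_mono[of "\<lambda>s. 0" z s n] Blp_scale[of n 0 z] by simp

lemma cc_Suc_ge: "s \<in> I \<Longrightarrow> cc n s \<le> cc (Suc n) s"
proof (induction n arbitrary: s)
  case 0 then show ?case using bnn by (simp add: Bl_def)
next
  case (Suc n)
  have "Bl (cc n) s \<le> Bl (cc (Suc n)) s" by (rule Bl_mono[OF Suc.IH Suc.prems])
  then show ?case by simp
qed

lemma cc_mono: assumes "s \<in> I" "n \<le> m" shows "cc n s \<le> cc m s"
  using assms(2)
proof (induction m rule: dec_induct)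
  case base then show ?case by simp
next
  case (step k) then show ?case using cc_Suc_ge[OF assms(1), of k] by linarith
qed

lemma cc_nonneg: "s \<in> I \<Longrightarrow> 0 \<le> cc n s"
  using cc_mono[of s 0 n] by simp

context
  fixes L :: "nat \<Rightarrow> real"
  assumes Lnn: "\<And>s. s \<in> I \<Longrightarrow> 0 \<le> L s"
  and Lsup: "\<And>s. s \<in> I \<Longrightarrow> Bl L s + bv s \<le> L s"
  and cpos: "\<And>s. s \<in> I \<Longrightarrow> \<exists>n. 0 < cc n s"
begin

lemma L_ge: "s \<in> I \<Longrightarrow> (Bl ^^ n) L s + cc n s \<le> L s"
proof (induction n arbitrary: s)
  case 0 then show ?case by simp
next
  case (Suc n)
  have "(Bl ^^ Suc n) L s + cc (Suc n) s = Bl (\<lambda>s. (Bl ^^ n) L s + cc n s) s + bv s"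
    by (simp add: Bl_add)
  also have "\<dots> \<le> Bl L s + bv s" using Bl_mono[OF Suc.IH Suc.prems] by simp
  also have "\<dots> \<le> L s" by (rule Lsup[OF Suc.prems])
  finally show ?case .
qed

lemma ex_N: "\<exists>N>0. \<forall>s\<in>I. 0 < cc N s"
proof -
  define ns where "ns = (\<lambda>s. SOME n. 0 < cc n s)"
  have ns: "s \<in> I \<Longrightarrow> 0 < cc (ns s) s" for s unfolding ns_def using cpos someI_ex by metis
  define N where "N = Suc (Max (insert 0 (ns ` I)))"
  have "s \<in> I \<Longrightarrow> ns s \<le> N" for s unfolding N_def using fin by (simp add: le_SucI)
  then have "s \<in> I \<Longrightarrow> 0 < cc N s" for s using ns cc_mono by (meson order_less_le_trans)
  then show ?thesis unfolding N_def by blast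
qed

lemma L_pos: "s \<in> I \<Longrightarrow> 0 < L s"
proof -
  assume s: "s \<in> I"
  obtain N where N: "\<forall>s\<in>I. 0 < cc N s" using ex_N by blast
  have "0 \<le> (Bl ^^ N) L s" using Blp_nonneg[OF Lnn s] .
  then show "0 < L s" using L_ge[OF s, of N] N[rule_format, OF s] by linarith
qed

lemma BlL_dec: "s \<in> I \<Longrightarrow> (Bl ^^ Suc n) L s \<le> (Bl ^^ n) L s"
proof -
  assume s: "s \<in> I"
  have "Bl L s' \<le> L s'" if "s' \<in> I" for s' using Lsup[OF that] bnn[OF that] by linarith
  then have "(Bl ^^ n) (Bl L) s \<le> (Bl ^^ n) L s" using Blp_mono s by blast
  then show ?thesis by (simp add: funpow_Suc_right del: funpow.simps)
qed

lemma BlL_antimono: assumes "s \<in> I" "n \<le> m" shows "(Bl ^^ m) L s \<le> (Bl ^^ n) L s"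
  using assms(2)
proof (induction m rule: dec_induct)
  case base then show ?case by simp
next
  case (step k) then show ?case using BlL_dec[OF assms(1), of k] by linarith
qed

lemma BlL_lim: "s \<in> I \<Longrightarrow> (\<lambda>n. (Bl ^^ n) L s) \<longlonglongrightarrow> 0"
proof -
  assume s: "s \<in> I"
  obtain N where N: "N > 0" "\<forall>s\<in>I. 0 < cc N s" using ex_N by blast
  define \<delta> where "\<delta> = Min (insert 1 ((\<lambda>s. cc N s / L s) ` I))"
  have dpos: "0 < \<delta>" unfolding \<delta>_def using fin N L_pos by (auto simp: Min_gr_iff)
  have dle: "\<delta> \<le> 1" unfolding \<delta>_def using fin by simp
  have dc: "\<delta> * L s' \<le> cc N s'" if s': "s' \<in> I" for s'
  proof -
    have "\<delta> \<le> cc N s' / L s'" unfolding \<delta>_def using fin s' by simp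
    then show ?thesis using L_pos[OF s'] by (simp add: le_divide_eq)
  qed
  define \<gamma> where "\<gamma> = 1 - \<delta>"
  have g: "0 \<le> \<gamma>" "\<gamma> < 1" unfolding \<gamma>_def using dpos dle by auto
  have stepN: "(Bl ^^ N) L s' \<le> \<gamma> * L s'" if s': "s' \<in> I" for s'
    using L_ge[OF s', of N] dc[OF s'] unfolding \<gamma>_def by (simp add: algebra_simps)
  have pw: "(Bl ^^ (m * N)) L s' \<le> \<gamma> ^ m * L s'" if s': "s' \<in> I" for m s'
    using s'
  proof (induction m arbitrary: s')
    case 0 then show ?case by simp
  next
    case (Suc m)
    have "(Bl ^^ (Suc m * N)) L s' = (Bl ^^ N) ((Bl ^^ (m * N)) L) s'"
      by (simp add: funpow_add)
    also have "\<dots> \<le> (Bl ^^ N) (\<lambda>s. \<gamma> ^ m * L s) s'"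
      by (rule Blp_mono[OF Suc.IH Suc.prems])
    also have "\<dots> = \<gamma> ^ m * (Bl ^^ N) L s'" by (simp add: Blp_scale)
    also have "\<dots> \<le> \<gamma> ^ m * (\<gamma> * L s')"
      using stepN[OF Suc.prems] g by (intro mult_left_mono) auto
    finally show ?case by (simp add: mult_ac)
  qed
  have up: "(Bl ^^ n) L s \<le> \<gamma> ^ (n div N) * L s" for n
  proof -
    have "n div N * N \<le> n" by simp
    then have "(Bl ^^ n) L s \<le> (Bl ^^ (n div N * N)) L s" by (rule BlL_antimono[OF s])
    also have "\<dots> \<le> \<gamma> ^ (n div N) * L s" by (rule pw[OF s])
    finally show ?thesis .
  qed
  have lim: "(\<lambda>n. \<gamma> ^ (n div N) * L s) \<longlonglongrightarrow> 0"
  proof -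
    have "(\<lambda>n. \<gamma> ^ n) \<longlonglongrightarrow> 0" using g by (intro LIMSEQ_power_zero) simp
    then have "(\<lambda>n. \<gamma> ^ (n div N)) \<longlonglongrightarrow> 0"
      using filterlim_compose filterlim_at_top_div_const_nat[OF N(1)] by blast
    then show ?thesis using tendsto_mult_left_zero by blast
  qed
  show ?thesis
    by (rule tendsto_sandwich[OF _ _ tendsto_const lim])
       (auto intro!: always_eventually Blp_nonneg[OF Lnn s] up)
qed

lemma Blp_lim: "s \<in> I \<Longrightarrow> (\<lambda>n. (Bl ^^ n) v s) \<longlonglongrightarrow> 0"
proof -
  assume s: "s \<in> I"
  define K where "K = Max (insert 0 ((\<lambda>s. \<bar>v s\<bar> / L s) ` I))"
  have K: "\<bar>v s'\<bar> \<le> K * L s'" if s': "s' \<in> I" for s'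
  proof -
    have "\<bar>v s'\<bar> / L s' \<le> K" unfolding K_def using fin s' by simp
    then show ?thesis using L_pos[OF s'] by (simp add: divide_le_eq)
  qed
  have a: "(Bl ^^ n) v s \<le> K * (Bl ^^ n) L s" for n
  proof -
    have "(Bl ^^ n) v s \<le> (Bl ^^ n) (\<lambda>s. K * L s) s" using K by (intro Blp_mono[OF _ s]) force
    then show ?thesis by (simp add: Blp_scale)
  qed
  have b: "- (K * (Bl ^^ n) L s) \<le> (Bl ^^ n) v s" for n
  proof -
    have "(Bl ^^ n) (\<lambda>s. (-1) * v s) s \<le> (Bl ^^ n) (\<lambda>s. K * L s) s" using K by (intro Blp_mono[OF _ s]) force
    then have "(-1) * (Bl ^^ n) v s \<le> K * (Bl ^^ n) L s" unfolding Blp_scale .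
    then show ?thesis by linarith
  qed
  have l: "(\<lambda>n. K * (Bl ^^ n) L s) \<longlonglongrightarrow> 0" using tendsto_mult_right_zero[OF BlL_lim[OF s]] by simp
  have l2: "(\<lambda>n. - (K * (Bl ^^ n) L s)) \<longlonglongrightarrow> 0" using tendsto_minus[OF l] by simp
  show ?thesis by (rule tendsto_sandwich[OF _ _ l2 l]) (auto intro!: always_eventually a b)
qed

end
end

lemma SD_in: "d \<in> SD_rules A \<Longrightarrow> d s \<in> {1..A}" unfolding SD_rules_def by auto

lemma stationary_shift: "(\<lambda>k. stationary d (Suc k)) = stationary d" "stationary d 0 = d"
  unfolding stationary_def by simp_all

context mctx begin

lemma contr_d:
  assumes d: "d \<in> SD_rules A"
  shows "contr {1..S} (\<lambda>s s'. p s (d s) s' * exp (- \<beta> * r s (d s) s'))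
                      (\<lambda>s. p s (d s) (Suc S) * exp (- \<beta> * r s (d s) (Suc S)))"
proof
  show "finite {1..S}" by simp
  fix s s' assume "s \<in> {1..S}" "s' \<in> {1..S}"
  then show "0 \<le> p s (d s) s' * exp (- \<beta> * r s (d s) s')"
    using p_nonneg[OF in_states _ in_states, of s "d s" s'] SD_in[OF d] by simp
next
  fix s assume "s \<in> {1..S}"
  then show "0 \<le> p s (d s) (Suc S) * exp (- \<beta> * r s (d s) (Suc S))"
    using p_nonneg[OF in_states _, of s "d s" "Suc S"] SD_in[OF d] by (simp add: states_def)
qed

lemma trans_cpos:
  assumes tr: "transient S A p" and d: "d \<in> SD_rules A"
  and Bm_def: "Bm = (\<lambda>s s'. p s (d s) s' * exp (- \<beta> * r s (d s) s'))"
  and bv_def: "bv = (\<lambda>s. p s (d s) (Suc S) * exp (- \<beta> * r s (d s) (Suc S)))"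
  and s0: "s0 \<in> {1..S}"
  shows "\<exists>n. 0 < contr.cc {1..S} Bm bv n s0"
proof (rule ccontr)
  interpret C: contr "{1..S}" Bm bv unfolding Bm_def bv_def by (rule contr_d[OF d])
  assume neg: "\<not> ?thesis"
  define R where "R = {s \<in> {1..S}. \<forall>n. C.cc n s = 0}"
  have s0R: "s0 \<in> R" unfolding R_def using s0 neg C.cc_nonneg[OF s0]
    by (auto simp: not_less intro: antisym)
  have RS: "R \<subseteq> {1..S}" unfolding R_def by auto
  have pnn: "s \<in> R \<Longrightarrow> s' \<in> states S \<Longrightarrow> 0 \<le> p s (d s) s'" for s s'
    using p_nonneg[OF in_states _, of s "d s" s'] SD_in[OF d] RS by auto
  have exitR: "p s (d s) (Suc S) = 0" if s: "s \<in> R" for s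
  proof -
    have "C.cc (Suc 0) s = 0" using s unfolding R_def by blast
    moreover have "C.cc (Suc 0) s = bv s" unfolding C.cc.simps C.Bl_def by simp
    ultimately have "bv s = 0" by simp
    then show ?thesis unfolding bv_def by simp
  qed
  have closedR: "s' \<in> R" if s: "s \<in> R" and s': "s' \<in> {1..S}" and pos: "p s (d s) s' \<noteq> 0" for s s'
  proof -
    have "C.cc n s' = 0" for n
    proof -
      have z: "C.cc (Suc n) s = 0" using s unfolding R_def by blast
      have "0 \<le> bv s" using C.bnn s RS by auto
      have nn: "\<forall>x\<in>{1..S}. 0 \<le> Bm s x * C.cc n x"
        using C.Bnn C.cc_nonneg s RS by (auto intro: mult_nonneg_nonneg)
      have ez: "C.cc (Suc n) s = bv s + (\<Sum>x\<in>{1..S}. Bm s x * C.cc n x)"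
        unfolding C.cc.simps C.Bl_def by simp
      have "(\<Sum>x\<in>{1..S}. Bm s x * C.cc n x) = 0"
      proof -
        have "0 \<le> (\<Sum>x\<in>{1..S}. Bm s x * C.cc n x)" using nn by (intro sum_nonneg) blast
        then show ?thesis using z ez \<open>0 \<le> bv s\<close> by linarith
      qed
      then have "Bm s s' * C.cc n s' = 0" using sum_nonneg_eq_0_iff[of "{1..S}" "\<lambda>x. Bm s x * C.cc n x"] nn s' by simp
      then show ?thesis using pos unfolding Bm_def by simp
    qed
    then show ?thesis unfolding R_def using s' by blast
  qed
  have pzero: "p s (d s) s'' = 0" if s: "s \<in> R" and s'': "s'' \<in> states S" "s'' \<notin> R" for s s''
  proof (cases "s'' = Suc S")
    case True then show ?thesis using exitR[OF s] by simp
  next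
    case False
    then have "s'' \<in> {1..S}" using s'' unfolding states_def by auto
    then show ?thesis using closedR[OF s] s'' by blast
  qed
  have total: "(\<Sum>s'\<in>R. state_prob S p (stationary d) s t s') = 1" if "s \<in> R" for s t
    using that
  proof (induction t arbitrary: s)
    case 0
    then show ?case using RS finite_subset[OF RS] by (simp add: sp_0)
  next
    case (Suc t)
    have sS: "s \<in> states S" using Suc.prems RS in_states by auto
    have "(\<Sum>s'\<in>R. state_prob S p (stationary d) s (Suc t) s')
        = (\<Sum>s'\<in>R. \<Sum>s''\<in>states S. p s (d s) s'' * state_prob S p (stationary d) s'' t s')"
      by (simp add: sp_Suc[OF sS] stationary_shift)
    also have "\<dots> = (\<Sum>s''\<in>states S. p s (d s) s'' * (\<Sum>s'\<in>R. state_prob S p (stationary d) s'' t s'))"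
      by (simp add: sum.swap[of _ R] sum_distrib_left)
    also have "\<dots> = (\<Sum>s''\<in>states S. p s (d s) s'')"
    proof (rule sum.cong[OF refl])
      fix s'' assume s'': "s'' \<in> states S"
      show "p s (d s) s'' * (\<Sum>s'\<in>R. state_prob S p (stationary d) s'' t s') = p s (d s) s''"
        using Suc.IH pzero[OF Suc.prems s''] by (cases "s'' \<in> R") auto
    qed
    also have "\<dots> = 1" using p_sum[OF sS SD_in[OF d]] .
    finally show ?case .
  qed
  have "summable (\<lambda>t. \<Sum>s'\<in>R. state_prob S p (stationary d) s0 t s')"
    using tr d s0 RS unfolding transient_def by (intro summable_sum) blast
  then have "summable (\<lambda>t. (1::real))" using total[OF s0R] by simp
  then show False by (simp add: summable_const_iff)
qed

end

context mctx begin

definition Ulim :: "nat \<Rightarrow> real" where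
  "Ulim s = real_of_ereal (limsup (\<lambda>t. ereal (Xopt t s)))"

definition Llim :: "nat \<Rightarrow> real" where
  "Llim s = real_of_ereal (liminf (\<lambda>t. ereal (Xopt t s)))"

definition Cq :: "nat \<Rightarrow> nat \<Rightarrow> real" where
  "Cq a s = (\<Sum>s'\<in>{1..S}. p s a s' * exp (- \<beta> * r s a s'))"

lemma Cq_nonneg: "a \<in> {1..A} \<Longrightarrow> s \<in> {1..S} \<Longrightarrow> 0 \<le> Cq a s"
  unfolding Cq_def by (intro sum_nonneg mult_nonneg_nonneg p_nonneg in_states) auto

lemma Qa_add_const: "Qa S p r \<beta> a (\<lambda>s'. z s' + c) s = Qa S p r \<beta> a z s + c * Cq a s"
  unfolding Qa_def Cq_def by (simp add: algebra_simps sum.distrib sum_distrib_left)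

lemma w_inf_opt_eq: "s \<in> {1..S} \<Longrightarrow> w_inf_opt S A p r \<beta> s = - limsup (\<lambda>t. ereal (Xopt t s))"
proof -
  assume s: "s \<in> {1..S}"
  have eq: "(\<lambda>t. ereal (w_opt S A p r \<beta> t s)) = (\<lambda>t. - ereal (Xopt t s))"
    using w_opt_eq[OF s] by (simp add: fun_eq_iff)
  show ?thesis unfolding w_inf_opt_def eq by (rule ereal_Liminf_uminus)
qed

context
  assumes H: "\<forall>s\<in>{1..S}. w_inf_opt S A p r \<beta> s \<noteq> -\<infinity>"
begin

lemma lims:
  assumes s: "s \<in> {1..S}"
  shows "limsup (\<lambda>t. ereal (Xopt t s)) = ereal (Ulim s)"
    "liminf (\<lambda>t. ereal (Xopt t s)) = ereal (Llim s)"
    "0 \<le> Llim s" "Llim s \<le> Ulim s"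
    "w_inf_opt S A p r \<beta> s = ereal (- Ulim s)"
proof -
  have l0: "0 \<le> liminf (\<lambda>t. ereal (Xopt t s))"
    using Xopt_pos[OF s] by (intro Liminf_bounded always_eventually) (simp add: less_imp_le)
  have lu: "liminf (\<lambda>t. ereal (Xopt t s)) \<le> limsup (\<lambda>t. ereal (Xopt t s))"
    by (rule Liminf_le_Limsup) simp
  have ninf: "limsup (\<lambda>t. ereal (Xopt t s)) \<noteq> \<infinity>"
    using H s w_inf_opt_eq[OF s] by auto
  show u: "limsup (\<lambda>t. ereal (Xopt t s)) = ereal (Ulim s)"
    unfolding Ulim_def using l0 lu ninf by (cases "limsup (\<lambda>t. ereal (Xopt t s))") auto
  show l: "liminf (\<lambda>t. ereal (Xopt t s)) = ereal (Llim s)"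
    unfolding Llim_def using l0 lu ninf by (cases "liminf (\<lambda>t. ereal (Xopt t s))") auto
  show "0 \<le> Llim s" using l0 l by simp
  show "Llim s \<le> Ulim s" using lu l u by simp
  show "w_inf_opt S A p r \<beta> s = ereal (- Ulim s)" using w_inf_opt_eq[OF s] u by simp
qed

lemma U_sub:
  assumes s: "s \<in> {1..S}" and a: "a \<in> {1..A}"
  shows "Ulim s \<le> Qa S p r \<beta> a Ulim s"
proof (rule field_le_epsilon)
  fix e :: real assume e: "0 < e"
  define \<epsilon> where "\<epsilon> = e / (Cq a s + 1)"
  have Cn: "0 \<le> Cq a s" by (rule Cq_nonneg[OF a s])
  have epos: "0 < \<epsilon>" unfolding \<epsilon>_def using e Cn by simp
  have ec: "\<epsilon> * Cq a s \<le> e" unfolding \<epsilon>_def using e Cn by (simp add: field_simps)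
  have "\<forall>s'\<in>{1..S}. eventually (\<lambda>t. ereal (Xopt t s') < ereal (Ulim s' + \<epsilon>)) sequentially"
  proof
    fix s' assume s': "s' \<in> {1..S}"
    show "eventually (\<lambda>t. ereal (Xopt t s') < ereal (Ulim s' + \<epsilon>)) sequentially"
      using epos by (intro Limsup_lessD) (simp add: lims(1)[OF s'])
  qed
  then have ev: "eventually (\<lambda>t. \<forall>s'\<in>{1..S}. Xopt t s' < Ulim s' + \<epsilon>) sequentially"
    by (intro eventually_ball_finite) auto
  have "eventually (\<lambda>t. ereal (Xopt (t + 1) s) \<le> ereal (Qa S p r \<beta> a Ulim s + e)) sequentially"
    using ev
  proof eventually_elim
    case (elim t)
    have "Xopt (t + 1) s \<le> Qa S p r \<beta> a (Xopt t) s" using Min_Q_le[OF a] by simp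
    also have "\<dots> \<le> Qa S p r \<beta> a (\<lambda>s'. Ulim s' + \<epsilon>) s"
      using elim by (intro Qa_mono[OF a s]) (simp add: less_imp_le)
    also have "\<dots> = Qa S p r \<beta> a Ulim s + \<epsilon> * Cq a s" by (rule Qa_add_const)
    also have "\<dots> \<le> Qa S p r \<beta> a Ulim s + e" using ec by simp
    finally show ?case by simp
  qed
  then have "limsup (\<lambda>t. ereal (Xopt (t + 1) s)) \<le> ereal (Qa S p r \<beta> a Ulim s + e)"
    by (rule Limsup_bounded)
  moreover have "limsup (\<lambda>t. ereal (Xopt (t + 1) s)) = ereal (Ulim s)"
    using limsup_shift[of "\<lambda>t. ereal (Xopt t s)"] lims(1)[OF s] by simp
  ultimately show "Ulim s \<le> Qa S p r \<beta> a Ulim s + e" by simp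
qed

lemma L_super:
  assumes s: "s \<in> {1..S}"
  shows "Min ((\<lambda>a. Qa S p r \<beta> a Llim s) ` {1..A}) \<le> Llim s"
proof (rule field_le_epsilon)
  fix e :: real assume e: "0 < e"
  define m where "m = Min ((\<lambda>a. Qa S p r \<beta> a Llim s) ` {1..A})"
  define Cm where "Cm = (\<Sum>a\<in>{1..A}. Cq a s)"
  have Cqle: "a \<in> {1..A} \<Longrightarrow> Cq a s \<le> Cm" for a
    unfolding Cm_def using Cq_nonneg[OF _ s] by (intro member_le_sum) auto
  have Cn: "0 \<le> Cm" unfolding Cm_def using Cq_nonneg[OF _ s] by (intro sum_nonneg) auto
  define \<epsilon> where "\<epsilon> = e / (Cm + 1)"
  have epos: "0 < \<epsilon>" unfolding \<epsilon>_def using e Cn by simp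
  have ec: "\<epsilon> * Cm \<le> e" unfolding \<epsilon>_def using e Cn by (simp add: field_simps)
  have "\<forall>s'\<in>{1..S}. eventually (\<lambda>t. ereal (Llim s' - \<epsilon>) < ereal (Xopt t s')) sequentially"
  proof
    fix s' assume s': "s' \<in> {1..S}"
    show "eventually (\<lambda>t. ereal (Llim s' - \<epsilon>) < ereal (Xopt t s')) sequentially"
      using epos by (intro less_LiminfD) (simp add: lims(2)[OF s'])
  qed
  then have ev: "eventually (\<lambda>t. \<forall>s'\<in>{1..S}. Llim s' - \<epsilon> < Xopt t s') sequentially"
    by (intro eventually_ball_finite) auto
  have "eventually (\<lambda>t. ereal (m - e) \<le> ereal (Xopt (t + 1) s)) sequentially"
    using ev
  proof eventually_elim
    case (elim t)
    have "m - e \<le> Qa S p r \<beta> a (Xopt t) s" if a: "a \<in> {1..A}" for a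
    proof -
      have "m - e \<le> Qa S p r \<beta> a Llim s - \<epsilon> * Cq a s"
        using Min_Q_le[OF a, of Llim s] ec Cqle[OF a] epos unfolding m_def
        by (smt (verit, best) mult_left_mono)
      also have "\<dots> = Qa S p r \<beta> a (\<lambda>s'. Llim s' + (- \<epsilon>)) s" using Qa_add_const[of a Llim "- \<epsilon>" s] by simp
      also have "\<dots> \<le> Qa S p r \<beta> a (Xopt t) s"
        using elim by (intro Qa_mono[OF a s]) (simp add: less_imp_le)
      finally show ?thesis .
    qed
    then have "m - e \<le> Xopt (Suc t) s" using A_pos by (simp add: Min_ge_iff)
    then show ?case by simp
  qed
  then have "ereal (m - e) \<le> liminf (\<lambda>t. ereal (Xopt (t + 1) s))"
    by (rule Liminf_bounded)
  moreover have "liminf (\<lambda>t. ereal (Xopt (t + 1) s)) = ereal (Llim s)"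
    using liminf_shift[of "\<lambda>t. ereal (Xopt t s)"] lims(2)[OF s] by simp
  ultimately show "m \<le> Llim s + e" by simp
qed

end
end

context mctx begin

lemma L_op_det:
  assumes d: "d \<in> SD_rules A"
  shows "L_op S A p r \<beta> (det_rule d) w s = - Qa S p r \<beta> (d s) (\<lambda>s'. - w s') s"
proof -
  have ds: "d s \<in> {1..A}" by (rule SD_in[OF d])
  have B: "Bmat S A p r \<beta> (det_rule d) s s' = p s (d s) s' * exp (- \<beta> * r s (d s) s')" for s'
  proof -
    have "Bmat S A p r \<beta> (det_rule d) s s' = (\<Sum>a\<in>{1..A}. if a = d s then p s a s' * exp (- \<beta> * r s a s') else 0)"
      unfolding Bmat_def det_rule_def by (rule sum.cong) auto
    also have "\<dots> = p s (d s) s' * exp (- \<beta> * r s (d s) s')" using ds by (simp add: sum.delta)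
    finally show ?thesis .
  qed
  have b: "bvec S A p r \<beta> (det_rule d) s = p s (d s) (Suc S) * exp (- \<beta> * r s (d s) (Suc S))"
  proof -
    have "bvec S A p r \<beta> (det_rule d) s = (\<Sum>a\<in>{1..A}. if a = d s then p s a (Suc S) * exp (- \<beta> * r s a (Suc S)) else 0)"
      unfolding bvec_def det_rule_def by (rule sum.cong) auto
    also have "\<dots> = p s (d s) (Suc S) * exp (- \<beta> * r s (d s) (Suc S))" using ds by (simp add: sum.delta)
    finally show ?thesis .
  qed
  show ?thesis unfolding L_op_def Qa_def B b by (simp add: sum_negf)
qed

lemma stat_MD: "d \<in> SD_rules A \<Longrightarrow> stationary d \<in> MD_policies A"
  unfolding SD_rules_def MD_policies_def stationary_def by auto

lemma main:
  assumes tr: "transient S A p"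
  and H: "\<forall>s\<in>{1..S}. w_inf_opt S A p r \<beta> s \<noteq> -\<infinity>"
  shows "\<exists>d\<in>SD_rules A.
           (\<forall>s\<in>{1..S}.
              w_inf_opt S A p r \<beta> s = w_inf S p r \<beta> (stationary d) s \<and>
              w_inf_opt S A p r \<beta> s =
                ereal (L_op S A p r \<beta> (det_rule d) (\<lambda>s'. real_of_ereal (w_inf_opt S A p r \<beta> s')) s)) \<and>
           (\<forall>w :: nat \<Rightarrow> real. (\<forall>s\<in>{1..S}. w s = L_op S A p r \<beta> (det_rule d) w s) \<longrightarrow>
              (\<forall>s\<in>{1..S}. ereal (w s) = w_inf_opt S A p r \<beta> s))"
proof -
  define d1 where "d1 = (\<lambda>s. SOME a. a \<in> {1..A} \<and> Qa S p r \<beta> a Llim s = Min ((\<lambda>a. Qa S p r \<beta> a Llim s) ` {1..A}))"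
  have d1: "d1 s \<in> {1..A} \<and> Qa S p r \<beta> (d1 s) Llim s = Min ((\<lambda>a. Qa S p r \<beta> a Llim s) ` {1..A})" for s
    unfolding d1_def using someI_ex[OF Min_Q_ex[unfolded Bex_def, of Llim s]] by simp
  have d1SD: "d1 \<in> SD_rules A" unfolding SD_rules_def using d1 by blast
  define Bm where "Bm = (\<lambda>s s'. p s (d1 s) s' * exp (- \<beta> * r s (d1 s) s'))"
  define bv where "bv = (\<lambda>s. p s (d1 s) (Suc S) * exp (- \<beta> * r s (d1 s) (Suc S)))"
  interpret C: contr "{1..S}" Bm bv unfolding Bm_def bv_def by (rule contr_d[OF d1SD])
  define T where "T = (\<lambda>z s. Qa S p r \<beta> (d1 s) z s)"
  have T_eq: "T z s = C.Bl z s + bv s" for z s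
    unfolding T_def Qa_def C.Bl_def unfolding Bm_def bv_def by simp
  have Tmono: "T z s \<le> T z' s" if "\<And>s. s \<in> {1..S} \<Longrightarrow> z s \<le> z' s" "s \<in> {1..S}" for z z' s
    unfolding T_eq using C.Bl_mono[OF that] by simp
  have Tcong: "T z s = T z' s" if "\<And>s. s \<in> {1..S} \<Longrightarrow> z s = z' s" for z z' s
    unfolding T_def using that by (rule Qa_cong)
  have Tdiff: "(T ^^ n) z s - (T ^^ n) z' s = (C.Bl ^^ n) (\<lambda>s. z s - z' s) s" for n z z' s
  proof (induction n arbitrary: s)
    case 0 then show ?case by simp
  next
    case (Suc n)
    have "(T ^^ Suc n) z s - (T ^^ Suc n) z' s = C.Bl ((T ^^ n) z) s - C.Bl ((T ^^ n) z') s"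
      by (simp add: T_eq)
    also have "\<dots> = C.Bl (\<lambda>s. (T ^^ n) z s - (T ^^ n) z' s) s"
      using fun_cong[OF C.Bl_diff[of "(T ^^ n) z" "(T ^^ n) z'"], of s] by simp
    also have "(\<lambda>s. (T ^^ n) z s - (T ^^ n) z' s) = (C.Bl ^^ n) (\<lambda>s. z s - z' s)"
      using Suc.IH by (simp add: fun_eq_iff)
    finally show ?case by simp
  qed
  have Lnn: "\<And>s. s \<in> {1..S} \<Longrightarrow> 0 \<le> Llim s" using lims(3)[OF H] by blast
  have Lsup: "\<And>s. s \<in> {1..S} \<Longrightarrow> C.Bl Llim s + bv s \<le> Llim s"
    using L_super[OF H] d1 unfolding T_eq[symmetric] T_def by metis
  have cpos: "\<And>s. s \<in> {1..S} \<Longrightarrow> \<exists>n. 0 < C.cc n s"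
    by (rule trans_cpos[OF tr d1SD Bm_def bv_def])
  have Blim: "(\<lambda>n. (C.Bl ^^ n) v s) \<longlonglongrightarrow> 0" if "s \<in> {1..S}" for v s
    by (rule C.Blp_lim[where L=Llim, OF Lnn Lsup cpos that])
  have Usub: "Ulim s \<le> T Ulim s" if "s \<in> {1..S}" for s
    unfolding T_def using U_sub[OF H that] d1 by blast
  have Upow: "Ulim s \<le> (T ^^ n) Ulim s" if "s \<in> {1..S}" for n s
    using that
  proof (induction n arbitrary: s)
    case 0 then show ?case by simp
  next
    case (Suc n)
    have "T Ulim s \<le> T ((T ^^ n) Ulim) s" by (rule Tmono[OF Suc.IH Suc.prems])
    then show ?case using Usub[OF Suc.prems] by simp
  qed
  have Lpow: "(T ^^ n) Llim s \<le> Llim s" if "s \<in> {1..S}" for n s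
    using that
  proof (induction n arbitrary: s)
    case 0 then show ?case by simp
  next
    case (Suc n)
    have "T ((T ^^ n) Llim) s \<le> T Llim s" by (rule Tmono[OF Suc.IH Suc.prems])
    moreover have "T Llim s \<le> Llim s" using Lsup[OF Suc.prems] T_eq by simp
    ultimately show ?case by simp
  qed
  have UL: "Ulim s = Llim s" if s: "s \<in> {1..S}" for s
  proof -
    have "Ulim s - Llim s \<le> (C.Bl ^^ n) (\<lambda>s. Ulim s - Llim s) s" for n
      using Upow[OF s, of n] Lpow[OF s, of n] Tdiff[where n=n and z=Ulim and z'=Llim and s=s] by linarith
    then have "Ulim s - Llim s \<le> 0" by (intro LIMSEQ_le_const[OF Blim[OF s]]) auto
    then show ?thesis using lims(4)[OF H s] by linarith
  qed
  have Ufix: "T Ulim s = Ulim s" if s: "s \<in> {1..S}" for s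
  proof -
    have "T Ulim s = T Llim s" using UL by (intro Tcong) auto
    also have "\<dots> \<le> Llim s" using Lsup[OF s] T_eq by simp
    finally show ?thesis using Usub[OF s] UL[OF s] by linarith
  qed
  have Upow_eq: "(T ^^ n) Ulim s = Ulim s" if "s \<in> {1..S}" for n s
    using that
  proof (induction n arbitrary: s)
    case 0 then show ?case by simp
  next
    case (Suc n)
    have "T ((T ^^ n) Ulim) s = T Ulim s" using Suc.IH by (intro Tcong) auto
    then show ?case using Ufix[OF Suc.prems] by simp
  qed
  have conv: "(\<lambda>n. (T ^^ n) z s) \<longlonglongrightarrow> Ulim s" if s: "s \<in> {1..S}" for z s
  proof -
    have "(\<lambda>n. (T ^^ n) z s - Ulim s) \<longlonglongrightarrow> 0"
      using Blim[OF s, of "\<lambda>s. z s - Ulim s"] Tdiff[where z=z and z'=Ulim and s=s] Upow_eq[OF s] by simp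
    then have "(\<lambda>n. ((T ^^ n) z s - Ulim s) + Ulim s) \<longlonglongrightarrow> 0 + Ulim s"
      by (intro tendsto_add tendsto_const)
    then show ?thesis by simp
  qed
  have statMD: "stationary d1 \<in> MD_policies A" by (rule stat_MD[OF d1SD])
  have EUstat: "EU S p r \<beta> (stationary d1) t s = (T ^^ t) (\<lambda>s. 1) s" if "s \<in> {1..S}" for t s
    using that
  proof (induction t arbitrary: s)
    case 0 then show ?case by (simp add: EU_0)
  next
    case (Suc t)
    have "EU S p r \<beta> (stationary d1) (Suc t) s = Qa S p r \<beta> (d1 s) (EU S p r \<beta> (stationary d1) t) s"
      using EU_Q[OF statMD Suc.prems, of t] by (simp add: stationary_shift)
    also have "\<dots> = T (EU S p r \<beta> (stationary d1) t) s" by (simp add: T_def)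
    also have "\<dots> = T ((T ^^ t) (\<lambda>s. 1)) s" using Suc.IH by (intro Tcong) auto
    finally show ?case by simp
  qed
  have G1: "w_inf_opt S A p r \<beta> s = w_inf S p r \<beta> (stationary d1) s" if s: "s \<in> {1..S}" for s
  proof -
    have eq: "(\<lambda>t. ereal (w_fin S p r \<beta> (stationary d1) t s)) = (\<lambda>t. ereal (- (T ^^ t) (\<lambda>s. 1) s))"
      using w_fin_EU[OF statMD in_states[OF s]] EUstat[OF s] by simp
    have "(\<lambda>t. ereal (- (T ^^ t) (\<lambda>s. 1) s)) \<longlonglongrightarrow> ereal (- Ulim s)"
      by (intro tendsto_ereal tendsto_minus conv[OF s])
    then have "w_inf S p r \<beta> (stationary d1) s = ereal (- Ulim s)"
      unfolding w_inf_def eq by (intro lim_imp_Liminf) simp_all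
    then show ?thesis using lims(5)[OF H s] by simp
  qed
  have G2: "w_inf_opt S A p r \<beta> s =
      ereal (L_op S A p r \<beta> (det_rule d1) (\<lambda>s'. real_of_ereal (w_inf_opt S A p r \<beta> s')) s)"
    if s: "s \<in> {1..S}" for s
  proof -
    have "L_op S A p r \<beta> (det_rule d1) (\<lambda>s'. real_of_ereal (w_inf_opt S A p r \<beta> s')) s
        = - Qa S p r \<beta> (d1 s) (\<lambda>s'. - real_of_ereal (w_inf_opt S A p r \<beta> s')) s"
      by (rule L_op_det[OF d1SD])
    also have "\<dots> = - T Ulim s"
    proof -
      have "Qa S p r \<beta> (d1 s) (\<lambda>s'. - real_of_ereal (w_inf_opt S A p r \<beta> s')) s = Qa S p r \<beta> (d1 s) Ulim s"
        by (rule Qa_cong) (simp add: lims(5)[OF H])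
      then show ?thesis by (simp add: T_def)
    qed
    also have "\<dots> = - Ulim s" using Ufix[OF s] by simp
    finally show ?thesis using lims(5)[OF H s] by simp
  qed
  have G3: "ereal (w s) = w_inf_opt S A p r \<beta> s"
    if w: "\<forall>s\<in>{1..S}. w s = L_op S A p r \<beta> (det_rule d1) w s" and s: "s \<in> {1..S}" for w s
  proof -
    define z where "z = (\<lambda>s. - w s)"
    have zfix: "T z s = z s" if "s \<in> {1..S}" for s
      using w that L_op_det[OF d1SD, of w s] unfolding T_def z_def by simp
    have zpow: "(T ^^ n) z s = z s" if "s \<in> {1..S}" for n s
      using that
    proof (induction n arbitrary: s)
      case 0 then show ?case by simp
    next
      case (Suc n)
      have "T ((T ^^ n) z) s = T z s" using Suc.IH by (intro Tcong) auto
      then show ?case using zfix[OF Suc.prems] by simp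
    qed
    have "(\<lambda>n. z s) \<longlonglongrightarrow> Ulim s" using conv[OF s, of z] zpow[OF s] by simp
    then have "z s = Ulim s" using LIMSEQ_unique tendsto_const by blast
    then show ?thesis using lims(5)[OF H s] unfolding z_def by simp
  qed
  show ?thesis using d1SD G1 G2 G3 by blast
qed

end

theorem theorem2:
  fixes S A :: nat and p r :: "nat \<Rightarrow> nat \<Rightarrow> nat \<Rightarrow> real" and \<mu> :: "nat \<Rightarrow> real" and \<beta> :: real
  assumes "0 < \<beta>"
    and "mdp S A p r \<mu>"
    and "transient S A p"
    and "\<forall>s\<in>{1..S}. w_inf_opt S A p r \<beta> s \<noteq> -\<infinity>"
  shows "\<exists>d\<in>SD_rules A.
           (\<forall>s\<in>{1..S}.
              w_inf_opt S A p r \<beta> s = w_inf S p r \<beta> (stationary d) s \<and>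
              w_inf_opt S A p r \<beta> s =
                ereal (L_op S A p r \<beta> (det_rule d) (\<lambda>s'. real_of_ereal (w_inf_opt S A p r \<beta> s')) s)) \<and>
           (\<forall>w :: nat \<Rightarrow> real. (\<forall>s\<in>{1..S}. w s = L_op S A p r \<beta> (det_rule d) w s) \<longrightarrow>
              (\<forall>s\<in>{1..S}. ereal (w s) = w_inf_opt S A p r \<beta> s))"
proof -
  have M: "mctx S A p r \<beta>"
  proof
    show "0 < \<beta>" by (rule assms(1))
    show "1 \<le> A" using assms(2) unfolding mdp_def by blast
    show "\<And>s a s'. s \<in> states S \<Longrightarrow> a \<in> {1..A} \<Longrightarrow> s' \<in> states S \<Longrightarrow> 0 \<le> p s a s'"
      using assms(2) unfolding mdp_def by blast
    show "\<And>s a. s \<in> states S \<Longrightarrow> a \<in> {1..A} \<Longrightarrow> (\<Sum>s'\<in>states S. p s a s') = 1"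
      using assms(2) unfolding mdp_def by blast
    show "\<And>a. a \<in> {1..A} \<Longrightarrow> p (Suc S) a (Suc S) = 1"
      using assms(2) unfolding mdp_def by blast
    show "\<And>a. a \<in> {1..A} \<Longrightarrow> r (Suc S) a (Suc S) = 0"
      using assms(2) unfolding mdp_def by blast
  qed
  show ?thesis by (rule mctx.main[OF M assms(3) assms(4)])
qed

end
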